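(* Let $f$ be a light complex-valued harmonic function in $\mathbb{C}$. Let $\Omega$ be a connected component of $\mathbb{C}\setminus(f(S)\cup C(f,\infty))$ such that $(\operatorname{int}\overline{\Omega})\setminus\Omega$ consists of finitely many points. Suppose there is a bounded connected component $R$ of $\mathbb{C}\setminus f^{-1}(f(S)\cup C(f,\infty))$ with $f(R)=\Omega$, and suppose every point of $(\operatorname{int}\overline{R})\setminus R$ is mapped into $(\operatorname{int}\overline{\Omega})\setminus\Omega$. If $(\operatorname{int}\overline{R})\setminus R$ contains no point of $S$, then $f$ is $\mathrm{Val}(f|_R,\Omega)$-to-$1$ on $\operatorname{int}\overline{R}$ (each point of $\operatorname{int}\overline{\Omega}$ has exactly $\mathrm{Val}(f|_R,\Omega)$ distinct preimages in $\operatorname{int}\overline{R}$). Moreover, if $\operatorname{int}\overline{\Omega}$ is simply connected, then $f$ is univalent in $\operatorname{int}\overline{R}$.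
   Context: A function is light if the preimage of each point is empty or totally disconnected. Writing $f=u+iv$, $J_f=u_xv_y-u_yv_x$ and $S=\{z: J_f(z)=0\}$. $C(f,\infty)$ is the set of finite points $\zeta$ for which there is a sequence $(z_n)$ with $|z_n|\to\infty$ and $f(z_n)\to\zeta$. $\mathrm{Val}(f|_R,\Omega)=\sup_{w\in\Omega}\#\{z\in R: f(z)=w\}$. *)

theory Defs
  imports "HOL-Analysis.Analysis" "HOL-Library.Extended_Nat"
begin

definition pdx :: "(complex \<Rightarrow> real) \<Rightarrow> complex \<Rightarrow> real" where
  "pdx g z = deriv (\<lambda>t::real. g (z + of_real t)) 0"

definition pdy :: "(complex \<Rightarrow> real) \<Rightarrow> complex \<Rightarrow> real" where
  "pdy g z = deriv (\<lambda>t::real. g (z + \<i> * of_real t)) 0"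

definition harmonic_real :: "(complex \<Rightarrow> real) \<Rightarrow> bool" where
  "harmonic_real g \<longleftrightarrow>
     (\<forall>z. g differentiable (at z)) \<and>
     (\<forall>z. pdx g differentiable (at z) \<and> pdy g differentiable (at z)) \<and>
     continuous_on UNIV (pdx (pdx g)) \<and> continuous_on UNIV (pdy (pdy g)) \<and>
     continuous_on UNIV (pdx (pdy g)) \<and> continuous_on UNIV (pdy (pdx g)) \<and>
     (\<forall>z. pdx (pdx g) z + pdy (pdy g) z = 0)"

definition harmonic_cplx :: "(complex \<Rightarrow> complex) \<Rightarrow> bool" where
  "harmonic_cplx f \<longleftrightarrow> harmonic_real (\<lambda>z. Re (f z)) \<and> harmonic_real (\<lambda>z. Im (f z))"

definition totally_disconnected :: "'a::topological_space set \<Rightarrow> bool" where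
  "totally_disconnected A \<longleftrightarrow> (\<forall>C. C \<subseteq> A \<and> connected C \<longrightarrow> (\<exists>x. C \<subseteq> {x}))"

definition light :: "(complex \<Rightarrow> complex) \<Rightarrow> bool" where
  "light f \<longleftrightarrow> (\<forall>w. f -` {w} = {} \<or> totally_disconnected (f -` {w}))"

text \<open>Jacobian J_f = u_x v_y - u_y v_x and its zero set S.\<close>
definition jac :: "(complex \<Rightarrow> complex) \<Rightarrow> complex \<Rightarrow> real" where
  "jac f z = pdx (\<lambda>z. Re (f z)) z * pdy (\<lambda>z. Im (f z)) z
           - pdy (\<lambda>z. Re (f z)) z * pdx (\<lambda>z. Im (f z)) z"

definition crit_set :: "(complex \<Rightarrow> complex) \<Rightarrow> complex set" where
  "crit_set f = {z. jac f z = 0}"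

definition cluster_inf :: "(complex \<Rightarrow> complex) \<Rightarrow> complex set" where
  "cluster_inf f = {\<zeta>. \<exists>zs::nat \<Rightarrow> complex.
      filterlim (\<lambda>n. norm (zs n)) at_top sequentially \<and> (\<lambda>n. f (zs n)) \<longlonglongrightarrow> \<zeta>}"

definition ecard :: "'a set \<Rightarrow> enat" where
  "ecard A = (if finite A then enat (card A) else \<infinity>)"

definition Val :: "(complex \<Rightarrow> complex) \<Rightarrow> complex set \<Rightarrow> complex set \<Rightarrow> enat" where
  "Val f R \<Omega> = (SUP w\<in>\<Omega>. ecard {z\<in>R. f z = w})"

end

theory Submission
  imports Defs
begin

lemma clopen_fip:
  fixes K :: "'a::metric_space set"
  assumes K: "compact K" and S: "closed S" and c: "c \<in> K"
    and disj: "S \<inter> {y\<in>K. \<forall>T. closedin (top_of_set K) T \<and> openin (top_of_set K) T \<and> c \<in> T \<longrightarrow> y \<in> T} = {}"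
  shows "\<exists>T. closedin (top_of_set K) T \<and> openin (top_of_set K) T \<and> c \<in> T \<and> T \<inter> S = {}"
proof -
  define F where "F = {T. closedin (top_of_set K) T \<and> openin (top_of_set K) T \<and> c \<in> T}"
  have clK: "closed K" using K compact_imp_closed by blast
  have Fcl: "closed T" if "T \<in> F" for T
    using that clK closedin_closed_trans F_def by blast
  have "\<exists>F'. finite F' \<and> F' \<subseteq> F \<and> (S \<inter> K) \<inter> \<Inter>F' = {}"
  proof (rule ccontr)
    assume H: "\<nexists>F'. finite F' \<and> F' \<subseteq> F \<and> (S \<inter> K) \<inter> \<Inter>F' = {}"
    have "(S \<inter> K) \<inter> \<Inter>F \<noteq> {}"
    proof (rule compact_imp_fip)
      show "compact (S \<inter> K)" using compact_Int_closed[OF K S] by (simp add: Int_commute)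
      show "closed T" if "T \<in> F" for T using Fcl that by simp
      show "S \<inter> K \<inter> \<Inter> F' \<noteq> {}" if "finite F'" "F' \<subseteq> F" for F' using H that by blast
    qed
    then obtain y where y: "y \<in> S" "y \<in> K" "\<And>T. T \<in> F \<Longrightarrow> y \<in> T" by blast
    have "y \<in> {y\<in>K. \<forall>T. closedin (top_of_set K) T \<and> openin (top_of_set K) T \<and> c \<in> T \<longrightarrow> y \<in> T}"
      using y(2) y(3) unfolding F_def by simp
    then show False using disj y(1) by blast
  qed
  then obtain F' where F': "finite F'" "F' \<subseteq> F" "(S \<inter> K) \<inter> \<Inter>F' = {}" by blast
  define T where "T = \<Inter>(insert K F')"
  have "closedin (top_of_set K) T"
    unfolding T_def using F' by (intro closedin_Inter) (auto simp: F_def)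
  moreover have "openin (top_of_set K) T"
    unfolding T_def using F' by (intro openin_Inter) (auto simp: F_def)
  moreover have "c \<in> T" using F' c unfolding T_def F_def by auto
  moreover have "T \<inter> S = {}" using F' unfolding T_def by auto
  ultimately show ?thesis by blast
qed

lemma quasi_connected:
  fixes K :: "'a::euclidean_space set"
  assumes K: "compact K" and c: "c \<in> K"
  defines "Q \<equiv> {y\<in>K. \<forall>T. closedin (top_of_set K) T \<and> openin (top_of_set K) T \<and> c \<in> T \<longrightarrow> y \<in> T}"
  shows "connected Q"
proof -
  have clK: "closed K" using K compact_imp_closed by blast
  have QK: "Q = \<Inter>(insert K {T. closedin (top_of_set K) T \<and> openin (top_of_set K) T \<and> c \<in> T})"
    unfolding Q_def by auto
  have clQ: "closed Q" unfolding QK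
    by (intro closed_Inter) (use clK closedin_closed_trans in blast)
  have cQ: "c \<in> Q" unfolding Q_def using c by auto
  show ?thesis
  proof (rule ccontr)
    assume "\<not> connected Q"
    then obtain A B where AB: "closed A" "closed B" "A \<noteq> {}" "B \<noteq> {}" "A \<union> B = Q" "A \<inter> B = {}"
      using connected_closed_set[OF clQ] by blast
    obtain U V where UV: "open U" "open V" "A \<subseteq> U" "B \<subseteq> V" "U \<inter> V = {}"
      using separation_normal[OF AB(1,2,6)] by metis
    have "closed (K \<inter> - (U \<union> V))" using clK UV by (intro closed_Int) auto
    moreover have "(K \<inter> - (U \<union> V)) \<inter> Q = {}" using AB UV by auto
    ultimately obtain T where T: "closedin (top_of_set K) T" "openin (top_of_set K) T" "c \<in> T"
        "T \<inter> (K \<inter> - (U \<union> V)) = {}"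
      using clopen_fip[OF K _ c, of "K \<inter> - (U \<union> V)"] unfolding Q_def by (auto simp: Int_commute)
    have TK: "T \<subseteq> K" using T(1) closedin_imp_subset by auto
    have TUV: "T \<subseteq> U \<union> V" using T(4) TK by auto
    have clo: "closedin (top_of_set K) (T \<inter> W) \<and> openin (top_of_set K) (T \<inter> W)"
      if "W = U \<or> W = V" for W
    proof
      show "openin (top_of_set K) (T \<inter> W)" using T(2) UV that openin_Int_open by blast
      have "T \<inter> W = T \<inter> (if W = U then - V else - U)" using TUV UV(5) that by auto
      moreover have "closed (if W = U then - V else - U)" using UV by auto
      ultimately show "closedin (top_of_set K) (T \<inter> W)" using T(1)
        by (metis closed_Int closed_subset clK closedin_closed_trans T(1) TK le_infI1)
    qed
    have "c \<in> A \<or> c \<in> B" using cQ AB by auto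
    then show False
    proof
      assume "c \<in> A"
      then have "c \<in> T \<inter> U" using T(3) UV(3) by auto
      then have "Q \<subseteq> T \<inter> U" using clo[of U] unfolding Q_def by blast
      then show False using AB UV by auto
    next
      assume "c \<in> B"
      then have "c \<in> T \<inter> V" using T(3) UV(4) by auto
      then have "Q \<subseteq> T \<inter> V" using clo[of V] unfolding Q_def by blast
      then show False using AB UV by auto
    qed
  qed
qed

lemma zero_dim_clopen:
  fixes K :: "'a::euclidean_space set"
  assumes K: "compact K" and c: "c \<in> K" and Y: "closed Y" "c \<notin> Y"
    and td: "\<And>C. C \<subseteq> K \<Longrightarrow> connected C \<Longrightarrow> \<exists>x. C \<subseteq> {x}"
  shows "\<exists>U. c \<in> U \<and> U \<subseteq> K \<and> U \<inter> Y = {} \<and> closed U \<and> openin (top_of_set K) U"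
proof -
  define Q where "Q \<equiv> {y\<in>K. \<forall>T. closedin (top_of_set K) T \<and> openin (top_of_set K) T \<and> c \<in> T \<longrightarrow> y \<in> T}"
  have "connected Q" using quasi_connected[OF K c] unfolding Q_def by simp
  moreover have "Q \<subseteq> K" unfolding Q_def by auto
  ultimately obtain x where "Q \<subseteq> {x}" using td by blast
  moreover have "c \<in> Q" unfolding Q_def using c by auto
  ultimately have "Y \<inter> Q = {}" using Y by auto
  then obtain T where T: "closedin (top_of_set K) T" "openin (top_of_set K) T" "c \<in> T" "T \<inter> Y = {}"
    using clopen_fip[OF K Y(1) c] unfolding Q_def by blast
  moreover have "closed T" using T(1) K compact_imp_closed closedin_closed_trans by blast
  moreover have "T \<subseteq> K" using T(1) closedin_imp_subset by auto
  ultimately show ?thesis by blast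
qed


lemma bl4: "bounded_linear (\<lambda>h::complex. complex_of_real (Re h * a + Im h * b) + \<i> * complex_of_real (Re h * c + Im h * d))"
proof -
  have "linear (\<lambda>h::complex. complex_of_real (Re h * a + Im h * b) + \<i> * complex_of_real (Re h * c + Im h * d))"
    by (rule linearI) (simp_all add: complex_eq_iff algebra_simps)
  then show ?thesis using linear_conv_bounded_linear by blast
qed

lemma pd_of_deriv:
  fixes g :: "complex \<Rightarrow> real"
  assumes D: "(g has_derivative D) (at z)"
  shows "pdx g z = D 1" "pdy g z = D \<i>"
proof -
  have bl: "bounded_linear D" using D has_derivative_bounded_linear by blast
  have lin: "linear D" using bl bounded_linear.linear by blast
  have h1: "((\<lambda>t::real. z + of_real t) has_derivative (\<lambda>t. of_real t)) (at 0)"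
    by (auto intro!: derivative_eq_intros)
  have D': "(g has_derivative D) (at ((\<lambda>t::real. z + of_real t) 0))" using D by simp
  have "((g \<circ> (\<lambda>t::real. z + of_real t)) has_derivative (D \<circ> (\<lambda>t. of_real t))) (at 0)"
    by (rule diff_chain_at[OF h1 D'])
  moreover have "(D \<circ> (\<lambda>t. of_real t)) = (*) (D 1)"
  proof
    fix t :: real
    have "D (of_real t) = D (t *\<^sub>R 1)" by (simp add: scaleR_conv_of_real)
    also have "\<dots> = t * D 1" using linear_scale[OF lin] by simp
    finally show "(D \<circ> (\<lambda>t. of_real t)) t = D 1 * t" by simp
  qed
  ultimately have "((\<lambda>t::real. g (z + of_real t)) has_real_derivative (D 1)) (at 0)"
    by (simp add: has_field_derivative_def o_def)
  then show "pdx g z = D 1" unfolding pdx_def by (rule DERIV_imp_deriv)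
  have h2: "((\<lambda>t::real. z + \<i> * of_real t) has_derivative (\<lambda>t. \<i> * of_real t)) (at 0)"
    by (auto intro!: derivative_eq_intros)
  have D'': "(g has_derivative D) (at ((\<lambda>t::real. z + \<i> * of_real t) 0))" using D by simp
  have "((g \<circ> (\<lambda>t::real. z + \<i> * of_real t)) has_derivative (D \<circ> (\<lambda>t. \<i> * of_real t))) (at 0)"
    by (rule diff_chain_at[OF h2 D''])
  moreover have "(D \<circ> (\<lambda>t. \<i> * of_real t)) = (*) (D \<i>)"
  proof
    fix t :: real
    have "D (\<i> * of_real t) = D (t *\<^sub>R \<i>)" by (simp add: scaleR_conv_of_real mult.commute)
    also have "\<dots> = t * D \<i>" using linear_scale[OF lin] by simp
    finally show "(D \<circ> (\<lambda>t. \<i> * of_real t)) t = D \<i> * t" by simp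
  qed
  ultimately have "((\<lambda>t::real. g (z + \<i> * of_real t)) has_real_derivative (D \<i>)) (at 0)"
    by (simp add: has_field_derivative_def o_def)
  then show "pdy g z = D \<i>" unfolding pdy_def by (rule DERIV_imp_deriv)
qed

lemma deriv_formula:
  fixes g :: "complex \<Rightarrow> real"
  assumes D: "(g has_derivative D) (at z)"
  shows "D = (\<lambda>h. Re h * pdx g z + Im h * pdy g z)"
proof
  fix h
  have lin: "linear D" using D has_derivative_bounded_linear bounded_linear.linear by blast
  have "h = Re h *\<^sub>R 1 + Im h *\<^sub>R \<i>" by (simp add: complex_eq_iff)
  then have "D h = D (Re h *\<^sub>R 1 + Im h *\<^sub>R \<i>)" by simp
  also have "\<dots> = Re h * D 1 + Im h * D \<i>" using linear_add[OF lin] linear_scale[OF lin] by simp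
  finally show "D h = Re h * pdx g z + Im h * pdy g z" using pd_of_deriv[OF D] by simp
qed

lemma harmonic_real_has_derivative:
  assumes "harmonic_real g"
  shows "(g has_derivative (\<lambda>h. Re h * pdx g z + Im h * pdy g z)) (at z)"
proof -
  obtain D where D: "(g has_derivative D) (at z)"
    using assms unfolding harmonic_real_def differentiable_def by blast
  then show ?thesis using deriv_formula[OF D] by simp
qed

lemma harmonic_real_cont:
  assumes "harmonic_real g"
  shows "isCont g z" "isCont (pdx g) z" "isCont (pdy g) z"
  using assms unfolding harmonic_real_def
  by (meson differentiable_imp_continuous_within)+


lemma cont4:
  fixes a b c d :: "complex \<Rightarrow> real"
  assumes "isCont a z" "isCont b z" "isCont c z" "isCont d z" "e > 0"
  shows "\<exists>\<delta>>0. \<forall>x. dist z x < \<delta> \<longrightarrow> \<bar>a x - a z\<bar> + \<bar>b x - b z\<bar> + \<bar>c x - c z\<bar> + \<bar>d x - d z\<bar> < e"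
proof -
  define h where "h = (\<lambda>x. \<bar>a x - a z\<bar> + \<bar>b x - b z\<bar> + \<bar>c x - c z\<bar> + \<bar>d x - d z\<bar>)"
  have "isCont h z" unfolding h_def using assms by (intro continuous_intros) auto
  then obtain \<delta> where "\<delta> > 0" "\<And>x. dist x z < \<delta> \<Longrightarrow> dist (h x) (h z) < e"
    using continuous_at_eps_delta \<open>e > 0\<close> by metis
  moreover have "h z = 0" unfolding h_def by simp
  moreover have "h x \<ge> 0" for x unfolding h_def by simp
  ultimately have "\<exists>\<delta>>0. \<forall>x. dist z x < \<delta> \<longrightarrow> h x < e"
    by (metis dist_commute dist_real_def diff_zero abs_of_nonneg)
  then show ?thesis unfolding h_def by simp
qed

lemma norm_cplx_le: "norm (complex_of_real a + \<i> * complex_of_real b) \<le> \<bar>a\<bar> + \<bar>b\<bar>"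
proof -
  have "norm (complex_of_real a + \<i> * complex_of_real b) \<le> norm (complex_of_real a) + norm (\<i> * complex_of_real b)"
    by (rule norm_triangle_ineq)
  also have "\<dots> = \<bar>a\<bar> + \<bar>b\<bar>" by (simp add: norm_mult)
  finally show ?thesis .
qed

lemma lin_le: "\<bar>Re h * p + Im h * q\<bar> \<le> (\<bar>p\<bar> + \<bar>q\<bar>) * norm h"
proof -
  have "\<bar>Re h * p + Im h * q\<bar> \<le> \<bar>Re h\<bar> * \<bar>p\<bar> + \<bar>Im h\<bar> * \<bar>q\<bar>"
    by (metis abs_mult abs_triangle_ineq)
  also have "\<dots> \<le> norm h * \<bar>p\<bar> + norm h * \<bar>q\<bar>"
    by (intro add_mono mult_right_mono abs_Re_le_cmod abs_Im_le_cmod) auto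
  finally show ?thesis by (simp add: algebra_simps)
qed

lemma harmonic_locally_injective:
  assumes H: "harmonic_cplx f" and J: "jac f z \<noteq> 0"
  shows "\<exists>r>0. inj_on f (ball z r)"
proof -
  define u where "u = (\<lambda>x. Re (f x))"
  define v where "v = (\<lambda>x. Im (f x))"
  have hu: "harmonic_real u" and hv: "harmonic_real v" using H unfolding harmonic_cplx_def u_def v_def by auto
  define ux where "ux = pdx u"
  define uy where "uy = pdy u"
  define vx where "vx = pdx v"
  define vy where "vy = pdy v"
  define f' where "f' = (\<lambda>y h. complex_of_real (Re h * ux y + Im h * uy y) + \<i> * complex_of_real (Re h * vx y + Im h * vy y))"
  have feq: "f = (\<lambda>x. complex_of_real (u x) + \<i> * complex_of_real (v x))"
    unfolding u_def v_def by (rule fun_complex_eq)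
  have derf: "(f has_derivative f' y) (at y)" for y
  proof -
    have du: "(u has_derivative (\<lambda>h. Re h * ux y + Im h * uy y)) (at y)"
      using harmonic_real_has_derivative[OF hu] unfolding ux_def uy_def by blast
    have dv: "(v has_derivative (\<lambda>h. Re h * vx y + Im h * vy y)) (at y)"
      using harmonic_real_has_derivative[OF hv] unfolding vx_def vy_def by blast
    have "((\<lambda>x. complex_of_real (u x) + \<i> * complex_of_real (v x)) has_derivative f' y) (at y)"
      unfolding f'_def by (auto intro!: derivative_eq_intros du dv)
    then show ?thesis using feq by simp
  qed
  define Jz where "Jz = jac f z"
  have Jz: "Jz = ux z * vy z - uy z * vx z" unfolding Jz_def jac_def ux_def uy_def vx_def vy_def u_def v_def by simp
  define g' where "g' = (\<lambda>h. complex_of_real (Re h * (vy z / Jz) + Im h * (- uy z / Jz)) + \<i> * complex_of_real (Re h * (- vx z / Jz) + Im h * (ux z / Jz)))"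
  have blg: "bounded_linear g'" unfolding g'_def by (rule bl4)
  have inv: "g' \<circ> f' z = id"
  proof
    fix h
    have J0: "Jz \<noteq> 0" using J Jz_def by simp
    have e1: "(Re h * ux z + Im h * uy z) * vy z - (Re h * vx z + Im h * vy z) * uy z = Re h * Jz"
      by (simp add: Jz algebra_simps)
    have e2: "(Re h * vx z + Im h * vy z) * ux z - (Re h * ux z + Im h * uy z) * vx z = Im h * Jz"
      by (simp add: Jz algebra_simps)
    have r1: "(Re h * ux z + Im h * uy z) * (vy z / Jz) + (Re h * vx z + Im h * vy z) * (- uy z / Jz) = Re h"
    proof -
      have "(Re h * ux z + Im h * uy z) * (vy z / Jz) + (Re h * vx z + Im h * vy z) * (- uy z / Jz)
           = ((Re h * ux z + Im h * uy z) * vy z - (Re h * vx z + Im h * vy z) * uy z) / Jz"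
        using J0 by (simp add: field_simps)
      also have "\<dots> = Re h" using e1 J0 by simp
      finally show ?thesis .
    qed
    have r2: "(Re h * ux z + Im h * uy z) * (- vx z / Jz) + (Re h * vx z + Im h * vy z) * (ux z / Jz) = Im h"
    proof -
      have "(Re h * ux z + Im h * uy z) * (- vx z / Jz) + (Re h * vx z + Im h * vy z) * (ux z / Jz)
           = ((Re h * vx z + Im h * vy z) * ux z - (Re h * ux z + Im h * uy z) * vx z) / Jz"
        using J0 by (simp add: field_simps)
      also have "\<dots> = Im h" using e2 J0 by simp
      finally show ?thesis .
    qed
    show "(g' \<circ> f' z) h = id h"
      unfolding g'_def f'_def o_def id_def using r1 r2
      by (simp add: complex_eq_iff)
  qed
  have cont: "\<exists>d>0. \<forall>x. dist z x < d \<longrightarrow> onorm (\<lambda>w. f' x w - f' z w) < e" if "e > 0" for e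
  proof -
    have ic: "isCont ux z" "isCont uy z" "isCont vx z" "isCont vy z"
      using harmonic_real_cont[OF hu] harmonic_real_cont[OF hv] unfolding ux_def uy_def vx_def vy_def by auto
    obtain d where d: "d > 0" "\<And>x. dist z x < d \<Longrightarrow> \<bar>ux x - ux z\<bar> + \<bar>uy x - uy z\<bar> + \<bar>vx x - vx z\<bar> + \<bar>vy x - vy z\<bar> < e"
      using cont4[OF ic \<open>e > 0\<close>] by blast
    have "onorm (\<lambda>w. f' x w - f' z w) < e" if "dist z x < d" for x
    proof -
      define b where "b = \<bar>ux x - ux z\<bar> + \<bar>uy x - uy z\<bar> + \<bar>vx x - vx z\<bar> + \<bar>vy x - vy z\<bar>"
      have "onorm (\<lambda>w. f' x w - f' z w) \<le> b"
      proof (rule onorm_bound)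
        show "0 \<le> b" unfolding b_def by simp
        fix w
        have "f' x w - f' z w = complex_of_real (Re w * (ux x - ux z) + Im w * (uy x - uy z)) + \<i> * complex_of_real (Re w * (vx x - vx z) + Im w * (vy x - vy z))"
          unfolding f'_def by (simp add: complex_eq_iff algebra_simps)
        also have "norm \<dots> \<le> \<bar>Re w * (ux x - ux z) + Im w * (uy x - uy z)\<bar> + \<bar>Re w * (vx x - vx z) + Im w * (vy x - vy z)\<bar>"
          by (rule norm_cplx_le)
        also have "\<dots> \<le> (\<bar>ux x - ux z\<bar> + \<bar>uy x - uy z\<bar>) * norm w + (\<bar>vx x - vx z\<bar> + \<bar>vy x - vy z\<bar>) * norm w"
          by (intro add_mono lin_le)
        also have "\<dots> = b * norm w" unfolding b_def by (simp add: algebra_simps)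
        finally show "norm (f' x w - f' z w) \<le> b * norm w" .
      qed
      also have "b < e" using d(2)[OF that] unfolding b_def .
      finally show ?thesis .
    qed
    then show ?thesis using d(1) by blast
  qed
  obtain r where "r > 0" "ball z r \<subseteq> UNIV" "inj_on f (ball z r)"
    using has_derivative_locally_injective[of z UNIV g' f' f, OF _ open_UNIV blg inv] derf cont by blast
  then show ?thesis by blast
qed


lemma harmonic_cont:
  assumes "harmonic_cplx f"
  shows "continuous_on UNIV f"
proof -
  have hu: "harmonic_real (\<lambda>x. Re (f x))" and hv: "harmonic_real (\<lambda>x. Im (f x))"
    using assms unfolding harmonic_cplx_def by auto
  have "isCont (\<lambda>x. complex_of_real (Re (f x)) + \<i> * complex_of_real (Im (f x))) z" for z
    using harmonic_real_cont(1)[OF hu, of z] harmonic_real_cont(1)[OF hv, of z]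
    by (intro continuous_intros) auto
  then have "isCont f z" for z by (subst fun_complex_eq) simp
  then show ?thesis by (simp add: continuous_at_imp_continuous_on)
qed

lemma closed_crit_set:
  assumes "harmonic_cplx f"
  shows "closed (crit_set f)"
proof -
  have hu: "harmonic_real (\<lambda>x. Re (f x))" and hv: "harmonic_real (\<lambda>x. Im (f x))"
    using assms unfolding harmonic_cplx_def by auto
  have "isCont (jac f) z" for z
    unfolding jac_def
    using harmonic_real_cont[OF hu, of z] harmonic_real_cont[OF hv, of z]
    by (intro continuous_intros) auto
  then have "continuous_on UNIV (jac f)" by (simp add: continuous_at_imp_continuous_on)
  then have "closed (jac f -` {0})" by (simp add: continuous_on_closed_vimage)
  moreover have "crit_set f = jac f -` {0}" unfolding crit_set_def by auto
  ultimately show ?thesis by simp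
qed

lemma not_cluster:
  assumes "w \<notin> cluster_inf f"
  shows "\<exists>r>0. \<exists>M. \<forall>z. norm z \<ge> M \<longrightarrow> dist (f z) w \<ge> r"
proof (rule ccontr)
  assume nc: "\<not> ?thesis"
  have ex: "\<exists>z. norm z \<ge> real n \<and> dist (f z) w < 1 / (real n + 1)" for n :: nat
  proof -
    have pos: "1 / (real n + 1) > 0" by simp
    have "\<not> (\<forall>z. norm z \<ge> real n \<longrightarrow> dist (f z) w \<ge> 1 / (real n + 1))"
    proof
      assume A: "\<forall>z. norm z \<ge> real n \<longrightarrow> dist (f z) w \<ge> 1 / (real n + 1)"
      have "\<exists>r>0. \<exists>M. \<forall>z. norm z \<ge> M \<longrightarrow> dist (f z) w \<ge> r"
        by (rule exI[of _ "1 / (real n + 1)"], rule conjI[OF pos], rule exI[of _ "real n"], rule A)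
      with nc show False by simp
    qed
    then show ?thesis by (auto simp: not_le)
  qed
  then have "\<forall>n::nat. \<exists>z. norm z \<ge> real n \<and> dist (f z) w < 1 / (real n + 1)" by blast
  from choice[OF this] obtain zs where zs0: "\<forall>n. norm (zs n) \<ge> real n \<and> dist (f (zs n)) w < 1 / (real n + 1)"
    by blast
  then have zs: "\<And>n. norm (zs n) \<ge> real n" "\<And>n. dist (f (zs n)) w < 1 / (real n + 1)" by auto
  have "filterlim (\<lambda>n. norm (zs n)) at_top sequentially"
    by (rule filterlim_at_top_mono[OF filterlim_real_sequentially]) (use zs(1) in auto)
  moreover have "(\<lambda>n. f (zs n)) \<longlonglongrightarrow> w"
  proof -
    have "(\<lambda>n. f (zs n) - w) \<longlonglongrightarrow> 0"
    proof (rule Lim_null_comparison)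
      show "\<forall>\<^sub>F n in sequentially. norm (f (zs n) - w) \<le> 1 / (real n + 1)"
        using zs(2) by (simp add: dist_norm less_imp_le)
      show "(\<lambda>n. 1 / (real n + 1)) \<longlonglongrightarrow> 0"
        using LIMSEQ_inverse_real_of_nat by (simp add: inverse_eq_divide add.commute)
    qed
    then show ?thesis by (simp add: LIM_zero_iff)
  qed
  ultimately have "w \<in> cluster_inf f" unfolding cluster_inf_def by blast
  with assms show False by simp
qed

lemma cluster_far:
  assumes "\<forall>z. norm z \<ge> M \<longrightarrow> dist (f z) w \<ge> r"
  shows "cluster_inf f \<inter> ball w r = {}"
proof (rule ccontr)
  assume "cluster_inf f \<inter> ball w r \<noteq> {}"
  then obtain \<zeta> where zt: "\<zeta> \<in> cluster_inf f" "\<zeta> \<in> ball w r" by blast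
  then obtain zs where z2: "filterlim (\<lambda>n. norm (zs n)) at_top sequentially"
     and z3: "(\<lambda>n. f (zs n)) \<longlonglongrightarrow> \<zeta>"
    unfolding cluster_inf_def by blast
  have z1: "dist w \<zeta> < r" using zt(2) by simp
  have "r - dist w \<zeta> > 0" using z1 by simp
  then have ev1: "\<forall>\<^sub>F n in sequentially. dist (f (zs n)) \<zeta> < r - dist w \<zeta>"
    using z3 tendstoD by blast
  have ev2: "\<forall>\<^sub>F n in sequentially. norm (zs n) \<ge> M"
    using z2 unfolding filterlim_at_top by blast
  have "\<forall>\<^sub>F n in sequentially. dist (f (zs n)) \<zeta> < r - dist w \<zeta> \<and> norm (zs n) \<ge> M"
    by (rule eventually_conj[OF ev1 ev2])
  then obtain N where N: "\<forall>n\<ge>N. dist (f (zs n)) \<zeta> < r - dist w \<zeta> \<and> norm (zs n) \<ge> M"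
    unfolding eventually_sequentially by blast
  then have n: "dist (f (zs N)) \<zeta> < r - dist w \<zeta>" "norm (zs N) \<ge> M" by auto
  have "dist (f (zs N)) w \<le> dist (f (zs N)) \<zeta> + dist w \<zeta>"
    using dist_triangle[of "f (zs N)" w \<zeta>] by (simp add: dist_commute)
  then have "dist (f (zs N)) w < r" using n(1) by linarith
  moreover have "dist (f (zs N)) w \<ge> r" using assms n(2) by blast
  ultimately show False by linarith
qed

lemma closed_X:
  assumes H: "harmonic_cplx f"
  shows "closed (f ` crit_set f \<union> cluster_inf f)"
proof -
  let ?X = "f ` crit_set f \<union> cluster_inf f"
  have contf: "continuous_on UNIV f" by (rule harmonic_cont[OF H])
  have "\<exists>e>0. ball w e \<subseteq> - ?X" if w: "w \<in> - ?X" for w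
  proof -
    obtain r M where rM: "r > 0" "\<forall>z. norm z \<ge> M \<longrightarrow> dist (f z) w \<ge> r"
      using not_cluster[of w f] w by auto
    have C: "cluster_inf f \<inter> ball w r = {}" by (rule cluster_far[OF rM(2)])
    have "compact (crit_set f \<inter> cball 0 M)"
      using closed_crit_set[OF H] by (simp add: compact_Int_closed closed_Int_compact)
    then have "compact (f ` (crit_set f \<inter> cball 0 M))"
      by (rule compact_continuous_image[OF continuous_on_subset[OF contf subset_UNIV]])
    then have cl: "closed (f ` (crit_set f \<inter> cball 0 M))" by (rule compact_imp_closed)
    have "w \<notin> f ` (crit_set f \<inter> cball 0 M)" using w by auto
    then obtain r' where r': "r' > 0" "ball w r' \<inter> f ` (crit_set f \<inter> cball 0 M) = {}"
    proof -
      have "open (- f ` (crit_set f \<inter> cball 0 M))" using cl by (simp add: closed_def)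
      then obtain r' where "r' > 0" "ball w r' \<subseteq> - f ` (crit_set f \<inter> cball 0 M)"
        using \<open>w \<notin> f ` (crit_set f \<inter> cball 0 M)\<close> open_contains_ball by blast
      then show ?thesis using that by blast
    qed
    have "ball w (min r r') \<subseteq> - ?X"
    proof
      fix y assume y: "y \<in> ball w (min r r')"
      have "y \<notin> cluster_inf f" using C y by auto
      moreover have "y \<notin> f ` crit_set f"
      proof
        assume "y \<in> f ` crit_set f"
        then obtain s where s: "s \<in> crit_set f" "y = f s" by blast
        have "dist (f s) w < r" using y s by (simp add: dist_commute)
        then have "norm s < M" using rM(2) by (meson not_le)
        then have "y \<in> f ` (crit_set f \<inter> cball 0 M)" using s by auto
        then show False using r' y by auto
      qed
      ultimately show "y \<in> - ?X" by simp
    qed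
    then show ?thesis using rM(1) r'(1) by (intro exI[of _ "min r r'"]) auto
  qed
  then have "open (- ?X)" by (simp add: open_contains_ball)
  then show ?thesis by (simp add: closed_def)
qed


locale plh =
  fixes f :: "complex \<Rightarrow> complex" and K B :: "complex set"
  assumes contf: "continuous_on UNIV f" and openK: "open K" and bddK: "bounded K"
    and openB: "open B" and fK: "f ` K \<subseteq> B"
    and bd: "\<And>z. z \<in> closure K \<Longrightarrow> z \<notin> K \<Longrightarrow> f z \<notin> B"
    and li: "\<And>z. z \<in> K \<Longrightarrow> \<exists>r>0. inj_on f (ball z r)"
begin

lemma li2: "z \<in> K \<Longrightarrow> \<exists>r>0. ball z r \<subseteq> K \<and> inj_on f (ball z r)"
proof -
  assume z: "z \<in> K"
  obtain r where r: "r > 0" "inj_on f (ball z r)" using li[OF z] by blast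
  obtain s where s: "s > 0" "ball z s \<subseteq> K" using openK z open_contains_ball by blast
  have "ball z (min r s) \<subseteq> K" using s by auto
  moreover have "inj_on f (ball z (min r s))" using r(2) by (rule inj_on_subset) auto
  ultimately show ?thesis using r(1) s(1) by (intro exI[of _ "min r s"]) auto
qed

lemma fiber_closure: "w \<in> B \<Longrightarrow> {z\<in>K. f z = w} = {z\<in>closure K. f z = w}"
  using bd closure_subset by blast

lemma fiber_compact: "w \<in> B \<Longrightarrow> compact {z\<in>K. f z = w}"
proof -
  assume w: "w \<in> B"
  have "closed {z\<in>closure K. f z = w}"
  proof -
    have "{z\<in>closure K. f z = w} = closure K \<inter> f -` {w}" by auto
    moreover have "closed (f -` {w})" using contf by (simp add: continuous_on_closed_vimage)
    ultimately show ?thesis by auto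
  qed
  moreover have "bounded {z\<in>closure K. f z = w}"
    using bddK bounded_closure bounded_subset by (metis (no_types, lifting) mem_Collect_eq subsetI)
  ultimately show ?thesis using fiber_closure[OF w] by (simp add: compact_eq_bounded_closed)
qed

lemma fiber_finite: "w \<in> B \<Longrightarrow> finite {z\<in>K. f z = w}"
proof -
  assume w: "w \<in> B"
  define P where "P = {z\<in>K. f z = w}"
  have "\<forall>p\<in>P. \<exists>r>0. inj_on f (ball p r)" using li unfolding P_def by blast
  then obtain r where r: "\<And>p. p \<in> P \<Longrightarrow> r p > 0 \<and> inj_on f (ball p (r p))"
    by metis
  have cP: "compact P" unfolding P_def by (rule fiber_compact[OF w])
  have "P \<subseteq> (\<Union>p\<in>P. ball p (r p))" using r by auto
  then obtain P' where P': "P' \<subseteq> P" "finite P'" "P \<subseteq> (\<Union>p\<in>P'. ball p (r p))"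
    using compactE_image[OF cP, of P "\<lambda>p. ball p (r p)"] by blast
  have "P \<subseteq> P'"
  proof
    fix z assume z: "z \<in> P"
    then obtain p where p: "p \<in> P'" "z \<in> ball p (r p)" using P'(3) by blast
    have "p \<in> P" using p P' by auto
    then have "f p = f z" "p \<in> ball p (r p)" using z r[of p] unfolding P_def by auto
    then have "z = p" using r[of p] \<open>p \<in> P\<close> p(2) unfolding inj_on_def by blast
    then show "z \<in> P'" using p by simp
  qed
  then show ?thesis using P'(2) finite_subset P_def by blast
qed


lemma local_struct:
  assumes w: "w \<in> B"
  defines "P \<equiv> {z\<in>K. f z = w}"
  shows "\<exists>W V. open W \<and> w \<in> W \<and> W \<subseteq> B \<and>
     (\<forall>p\<in>P. open (V p) \<and> p \<in> V p \<and> V p \<subseteq> K \<and> inj_on f (V p) \<and> W \<subseteq> f ` V p) \<and>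
     (\<forall>p\<in>P. \<forall>q\<in>P. p \<noteq> q \<longrightarrow> V p \<inter> V q = {}) \<and>
     (\<forall>z\<in>K. f z \<in> W \<longrightarrow> (\<exists>p\<in>P. z \<in> V p))"
proof -
  have finP: "finite P" unfolding P_def by (rule fiber_finite[OF w])
  have "\<exists>\<rho>>0. ball p \<rho> \<subseteq> K \<and> inj_on f (ball p \<rho>) \<and> (\<forall>q\<in>P. q \<noteq> p \<longrightarrow> 2 * \<rho> \<le> dist p q)"
    if p: "p \<in> P" for p
  proof -
    obtain r where r: "r > 0" "ball p r \<subseteq> K" "inj_on f (ball p r)" using li2 p unfolding P_def by blast
    obtain d where d: "d > 0" "\<forall>q\<in>P. q \<noteq> p \<longrightarrow> d \<le> dist p q" using finite_set_avoid[OF finP] by blast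
    have i1: "inj_on f (ball p (min r (d / 2)))" using r(3) by (rule inj_on_subset) auto
    have i2: "ball p (min r (d / 2)) \<subseteq> K" using r(2) by auto
    have i3: "\<forall>q\<in>P. q \<noteq> p \<longrightarrow> 2 * min r (d / 2) \<le> dist p q" using d by auto
    have i4: "min r (d / 2) > 0" using r(1) d(1) by simp
    show ?thesis using i1 i2 i3 i4 by blast
  qed
  then have "\<forall>p\<in>P. \<exists>\<rho>>0. ball p \<rho> \<subseteq> K \<and> inj_on f (ball p \<rho>) \<and> (\<forall>q\<in>P. q \<noteq> p \<longrightarrow> 2 * \<rho> \<le> dist p q)"
    by blast
  from bchoice[OF this] obtain \<rho> where \<rho>0: "\<forall>p\<in>P. \<rho> p > 0 \<and> ball p (\<rho> p) \<subseteq> K \<and> inj_on f (ball p (\<rho> p)) \<and>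
      (\<forall>q\<in>P. q \<noteq> p \<longrightarrow> 2 * \<rho> p \<le> dist p q)"
    by blast
  then have \<rho>: "\<And>p. p \<in> P \<Longrightarrow> \<rho> p > 0 \<and> ball p (\<rho> p) \<subseteq> K \<and> inj_on f (ball p (\<rho> p)) \<and>
      (\<forall>q\<in>P. q \<noteq> p \<longrightarrow> 2 * \<rho> p \<le> dist p q)"
    by blast
  define V where "V = (\<lambda>p. ball p (\<rho> p))"
  have Vp: "open (V p) \<and> p \<in> V p \<and> V p \<subseteq> K \<and> inj_on f (V p)" if "p \<in> P" for p
  proof -
    have A: "\<rho> p > 0" "ball p (\<rho> p) \<subseteq> K" "inj_on f (ball p (\<rho> p))" using \<rho>[OF that] by blast+
    show ?thesis unfolding V_def using A by simp
  qed
  have disj: "V p \<inter> V q = {}" if "p \<in> P" "q \<in> P" "p \<noteq> q" for p q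
  proof (rule ccontr)
    assume "V p \<inter> V q \<noteq> {}"
    then obtain z where z: "dist p z < \<rho> p" "dist q z < \<rho> q" unfolding V_def by auto
    have "dist p q \<le> dist p z + dist q z" using dist_triangle[of p q z] by (simp add: dist_commute)
    moreover have "2 * \<rho> p \<le> dist p q"
    proof -
      have A: "\<forall>q'\<in>P. q' \<noteq> p \<longrightarrow> 2 * \<rho> p \<le> dist p q'" using \<rho>[OF that(1)] by blast
      show ?thesis using A that(2,3) by auto
    qed
    moreover have "2 * \<rho> q \<le> dist p q"
    proof -
      have A: "\<forall>q'\<in>P. q' \<noteq> q \<longrightarrow> 2 * \<rho> q \<le> dist q q'" using \<rho>[OF that(2)] by blast
      then have "2 * \<rho> q \<le> dist q p" using that(1,3) by auto
      then show ?thesis by (simp add: dist_commute)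
    qed
    ultimately show False using z by linarith
  qed
  have openfV: "open (f ` V p)" if "p \<in> P" for p
    using Vp[OF that] by (intro invariance_of_domain continuous_on_subset[OF contf]) auto
  have wfV: "w \<in> f ` V p" if "p \<in> P" for p
    using Vp[OF that] that unfolding P_def by auto
  define L where "L = closure K - (\<Union>p\<in>P. V p)"
  have cL: "compact L"
  proof -
    have "closed L" unfolding L_def using Vp by (intro closed_Diff open_UN) auto
    moreover have "bounded L" unfolding L_def using bddK bounded_closure bounded_subset by blast
    ultimately show ?thesis by (simp add: compact_eq_bounded_closed)
  qed
  then have "compact (f ` L)" by (rule compact_continuous_image[OF continuous_on_subset[OF contf subset_UNIV]])
  then have clfL: "closed (f ` L)" by (rule compact_imp_closed)
  have wL: "w \<notin> f ` L"
  proof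
    assume "w \<in> f ` L"
    then obtain z where z: "z \<in> L" "f z = w" by auto
    show False
    proof (cases "z \<in> K")
      case True
      then have "z \<in> P" using z unfolding P_def by simp
      then show False using z Vp unfolding L_def by blast
    next
      case False
      then show False using bd[of z] z w unfolding L_def by auto
    qed
  qed
  have "open (- f ` L)" using clfL by (simp add: closed_def)
  then obtain \<epsilon> where \<epsilon>: "\<epsilon> > 0" "ball w \<epsilon> \<subseteq> - f ` L"
    using wL open_contains_ball by blast
  define W where "W = ball w \<epsilon> \<inter> B \<inter> (\<Inter>p\<in>P. f ` V p)"
  have WV: "W \<subseteq> f ` V p" if "p \<in> P" for p using that unfolding W_def by blast
  have "open W" unfolding W_def using openB openfV finP by (intro open_Int open_INT) auto
  moreover have "w \<in> W" unfolding W_def using \<epsilon> w wfV by auto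
  moreover have "W \<subseteq> B" unfolding W_def by auto
  moreover have "\<forall>p\<in>P. open (V p) \<and> p \<in> V p \<and> V p \<subseteq> K \<and> inj_on f (V p) \<and> W \<subseteq> f ` V p"
    using Vp WV by simp
  moreover have "\<forall>z\<in>K. f z \<in> W \<longrightarrow> (\<exists>p\<in>P. z \<in> V p)"
  proof (intro ballI impI)
    fix z assume z: "z \<in> K" "f z \<in> W"
    show "\<exists>p\<in>P. z \<in> V p"
    proof (rule ccontr)
      assume "\<not> (\<exists>p\<in>P. z \<in> V p)"
      then have "z \<in> L" unfolding L_def using z(1) closure_subset by blast
      then have "f z \<in> f ` L" by simp
      moreover have "f z \<in> ball w \<epsilon>" using z(2) unfolding W_def by simp
      ultimately show False using \<epsilon>(2) by blast
    qed
  qed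
  ultimately show ?thesis using disj by (intro exI[of _ W] exI[of _ V]) simp
qed


lemma fiber_card_local:
  assumes w: "w \<in> B"
  shows "\<exists>W. open W \<and> w \<in> W \<and> W \<subseteq> B \<and>
     (\<forall>w'\<in>W. finite {z\<in>K. f z = w'} \<and> card {z\<in>K. f z = w'} = card {z\<in>K. f z = w})"
proof -
  define P where "P = {z\<in>K. f z = w}"
  obtain W V where WV: "open W" "w \<in> W" "W \<subseteq> B"
     "\<forall>p\<in>P. open (V p) \<and> p \<in> V p \<and> V p \<subseteq> K \<and> inj_on f (V p) \<and> W \<subseteq> f ` V p"
     "\<forall>p\<in>P. \<forall>q\<in>P. p \<noteq> q \<longrightarrow> V p \<inter> V q = {}"
     "\<forall>z\<in>K. f z \<in> W \<longrightarrow> (\<exists>p\<in>P. z \<in> V p)"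
    using local_struct[OF w] unfolding P_def by blast
  have finP: "finite P" unfolding P_def by (rule fiber_finite[OF w])
  have "finite {z\<in>K. f z = w'} \<and> card {z\<in>K. f z = w'} = card P" if w': "w' \<in> W" for w'
  proof -
    define h where "h = (\<lambda>p. SOME z. z \<in> V p \<and> f z = w')"
    have h: "h p \<in> V p \<and> f (h p) = w'" if p: "p \<in> P" for p
    proof -
      have "w' \<in> f ` V p" using WV(4) p w' by blast
      then have "\<exists>z. z \<in> V p \<and> f z = w'" by auto
      then show ?thesis unfolding h_def by (rule someI_ex)
    qed
    have eq: "{z\<in>K. f z = w'} = h ` P"
    proof
      show "{z\<in>K. f z = w'} \<subseteq> h ` P"
      proof
        fix z assume z: "z \<in> {z\<in>K. f z = w'}"
        then obtain p where p: "p \<in> P" "z \<in> V p" using WV(6) w' by auto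
        have "inj_on f (V p)" using WV(4) p(1) by blast
        moreover have "h p \<in> V p" "f (h p) = f z" using h[OF p(1)] z by auto
        ultimately have "z = h p" using p(2) unfolding inj_on_def by metis
        then show "z \<in> h ` P" using p(1) by blast
      qed
      show "h ` P \<subseteq> {z\<in>K. f z = w'}"
      proof
        fix z assume "z \<in> h ` P"
        then obtain p where p: "p \<in> P" "z = h p" by blast
        have "V p \<subseteq> K" using WV(4) p(1) by blast
        then show "z \<in> {z\<in>K. f z = w'}" using h[OF p(1)] p(2) by auto
      qed
    qed
    have "inj_on h P"
    proof (rule inj_onI)
      fix p q assume pq: "p \<in> P" "q \<in> P" "h p = h q"
      show "p = q"
      proof (rule ccontr)
        assume "p \<noteq> q"
        then have "V p \<inter> V q = {}" using WV(5) pq by blast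
        moreover have "h p \<in> V p" "h q \<in> V q" using h[OF pq(1)] h[OF pq(2)] by auto
        ultimately show False using pq(3) by auto
      qed
    qed
    then have "card (h ` P) = card P" by (rule card_image)
    then show ?thesis using eq finP by simp
  qed
  then show ?thesis using WV(1-3) unfolding P_def by blast
qed

lemma fiber_card_const:
  assumes conB: "connected B"
  shows "\<exists>k. \<forall>w\<in>B. finite {z\<in>K. f z = w} \<and> card {z\<in>K. f z = w} = k"
proof -
  have "(\<lambda>w. card {z\<in>K. f z = w}) constant_on B"
  proof (rule locally_constant_imp_constant[OF conB])
    fix a assume a: "a \<in> B"
    obtain W where W: "open W" "a \<in> W" "W \<subseteq> B"
       "\<forall>w'\<in>W. finite {z\<in>K. f z = w'} \<and> card {z\<in>K. f z = w'} = card {z\<in>K. f z = a}"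
      using fiber_card_local[OF a] by blast
    show "\<exists>T. openin (top_of_set B) T \<and> a \<in> T \<and> (\<forall>x\<in>T. card {z\<in>K. f z = x} = card {z\<in>K. f z = a})"
      using W open_subset[OF W(3) W(1)] by blast
  qed
  then obtain k where "\<forall>w\<in>B. card {z\<in>K. f z = w} = k" unfolding constant_on_def by blast
  then show ?thesis using fiber_finite by blast
qed

lemma covering:
  assumes conB: "connected B" and surj: "f ` K = B"
  shows "covering_space K f B"
proof (rule covering_spaceI)
  show "continuous_on K f" using contf continuous_on_subset by blast
  show "f ` K = B" by (rule surj)
  fix w assume w: "w \<in> B"
  define P where "P = {z\<in>K. f z = w}"
  obtain W V where WV: "open W" "w \<in> W" "W \<subseteq> B"
     "\<forall>p\<in>P. open (V p) \<and> p \<in> V p \<and> V p \<subseteq> K \<and> inj_on f (V p) \<and> W \<subseteq> f ` V p"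
     "\<forall>p\<in>P. \<forall>q\<in>P. p \<noteq> q \<longrightarrow> V p \<inter> V q = {}"
     "\<forall>z\<in>K. f z \<in> W \<longrightarrow> (\<exists>p\<in>P. z \<in> V p)"
    using local_struct[OF w] unfolding P_def by blast
  define U where "U = (\<lambda>p. V p \<inter> f -` W)"
  have Uo: "open (U p)" if "p \<in> P" for p
  proof -
    have "open (V p)" using WV(4) that by blast
    then show ?thesis unfolding U_def
      using continuous_open_preimage[OF continuous_on_subset[OF contf subset_UNIV] _ WV(1)] by blast
  qed
  have UK: "U p \<subseteq> K" if "p \<in> P" for p using WV(4) that unfolding U_def by blast
  have "\<Union>(U ` P) = K \<inter> f -` W"
  proof
    show "\<Union>(U ` P) \<subseteq> K \<inter> f -` W" using UK unfolding U_def by blast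
    show "K \<inter> f -` W \<subseteq> \<Union>(U ` P)" using WV(6) unfolding U_def by blast
  qed
  moreover have "\<forall>u\<in>U ` P. openin (top_of_set K) u"
    using Uo UK open_subset by blast
  moreover have "pairwise disjnt (U ` P)"
  proof (clarsimp simp: pairwise_def)
    fix p q assume pq: "p \<in> P" "q \<in> P" "U p \<noteq> U q"
    then have "p \<noteq> q" by auto
    then have "V p \<inter> V q = {}" using WV(5) pq by blast
    then show "disjnt (U p) (U q)" unfolding U_def disjnt_def by blast
  qed
  moreover have "\<forall>u\<in>U ` P. \<exists>q. homeomorphism u W f q"
  proof
    fix u assume "u \<in> U ` P"
    then obtain p where p: "p \<in> P" "u = U p" by blast
    have inj: "inj_on f (U p)" using WV(4) p(1) unfolding U_def by (meson inf_le1 inj_on_subset)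
    obtain q where q: "homeomorphism (U p) (f ` U p) f q"
      using invariance_of_domain_homeomorphism[OF Uo[OF p(1)] continuous_on_subset[OF contf subset_UNIV] _ inj]
      by auto
    have "f ` U p = W"
    proof
      show "f ` U p \<subseteq> W" unfolding U_def by blast
      show "W \<subseteq> f ` U p"
      proof
        fix y assume y: "y \<in> W"
        then have "y \<in> f ` V p" using WV(4) p(1) by blast
        then obtain z where "z \<in> V p" "y = f z" by blast
        then show "y \<in> f ` U p" unfolding U_def using y by blast
      qed
    qed
    then show "\<exists>q. homeomorphism u W f q" using q p(2) by auto
  qed
  ultimately show "\<exists>T. w \<in> T \<and> openin (top_of_set B) T \<and>
            (\<exists>v. \<Union> v = K \<inter> f -` T \<and> (\<forall>u\<in>v. openin (top_of_set K) u) \<and>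
                 pairwise disjnt v \<and> (\<forall>u\<in>v. \<exists>q. homeomorphism u T f q))"
    using WV(1-3) open_subset[OF WV(3) WV(1)] by (intro exI[of _ W] conjI exI[of _ "U ` P"]) auto
qed


lemma inj_simply_connected:
  assumes conB: "connected B" and scB: "simply_connected B" and conK: "connected K"
    and surj: "f ` K = B"
  shows "inj_on f K"
proof -
  have cov: "covering_space K f B" by (rule covering[OF conB surj])
  obtain g where g: "continuous_on B g" "g \<in> B \<rightarrow> K" "\<And>y. y \<in> B \<Longrightarrow> f (g y) = id y"
  proof -
    have fim: "id \<in> B \<rightarrow> B" by auto
    have cid: "continuous_on B id" by (simp add: continuous_on_id)
    show ?thesis
      using covering_space_lift[OF cov scB open_imp_locally_path_connected[OF openB] cid fim] that
      by blast
  qed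
  define G where "G = {z\<in>K. g (f z) = z}"
  have GgB: "G = g ` B"
  proof
    show "G \<subseteq> g ` B"
    proof
      fix z assume "z \<in> G"
      then have "z \<in> K" "g (f z) = z" unfolding G_def by auto
      moreover have "f z \<in> B" using fK \<open>z \<in> K\<close> by blast
      ultimately show "z \<in> g ` B" by (intro image_eqI[of z g "f z"]) auto
    qed
    show "g ` B \<subseteq> G"
    proof
      fix z assume "z \<in> g ` B"
      then obtain y where y: "y \<in> B" "z = g y" by blast
      then have "z \<in> K" using g(2) by auto
      moreover have "g (f z) = z" using g(3)[OF y(1)] y(2) by simp
      ultimately show "z \<in> G" unfolding G_def by simp
    qed
  qed
  have contgf: "continuous_on K (\<lambda>z. g (f z))"
    by (rule continuous_on_compose2[OF g(1) continuous_on_subset[OF contf subset_UNIV] fK])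
  have "closedin (top_of_set K) G"
  proof -
    have "continuous_on K (\<lambda>z. g (f z) - z)" using contgf by (intro continuous_intros)
    then have "closedin (top_of_set K) (K \<inter> (\<lambda>z. g (f z) - z) -` {0})"
      by (rule continuous_closedin_preimage) simp
    moreover have "K \<inter> (\<lambda>z. g (f z) - z) -` {0} = G" unfolding G_def by auto
    ultimately show ?thesis by simp
  qed
  moreover have "openin (top_of_set K) G"
  proof -
    have "\<exists>s>0. ball z s \<subseteq> G" if z: "z \<in> G" for z
    proof -
      have zK: "z \<in> K" and gz: "g (f z) = z" using z unfolding G_def by auto
      obtain r where r: "r > 0" "ball z r \<subseteq> K" "inj_on f (ball z r)" using li2[OF zK] by blast
      have "isCont (\<lambda>z. g (f z)) z"
        using contgf zK continuous_on_eq_continuous_at[OF openK] by blast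
      then have "\<forall>e>0. \<exists>d>0. \<forall>x. dist x z < d \<longrightarrow> dist (g (f x)) (g (f z)) < e"
        unfolding continuous_at_eps_delta by blast
      then obtain d where d: "d > 0" "\<And>x. dist x z < d \<Longrightarrow> dist (g (f x)) (g (f z)) < r"
        using r(1) by blast
      have "ball z (min d r) \<subseteq> G"
      proof
        fix x assume x: "x \<in> ball z (min d r)"
        then have xb: "x \<in> ball z r" and xK: "x \<in> K" using r(2) by auto
        have "dist (g (f x)) z < r" using d(2)[of x] x gz by (simp add: dist_commute)
        then have gb: "g (f x) \<in> ball z r" by (simp add: dist_commute)
        have "f x \<in> B" using fK xK by blast
        then have "f (g (f x)) = f x" using g(3) by simp
        then have "g (f x) = x" using r(3) gb xb unfolding inj_on_def by blast
        then show "x \<in> G" unfolding G_def using xK by simp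
      qed
      then show ?thesis using d(1) r(1) by (intro exI[of _ "min d r"]) auto
    qed
    then have "open G" by (simp add: open_contains_ball)
    moreover have "G \<subseteq> K" unfolding G_def by auto
    ultimately show ?thesis by (rule open_subset[rotated])
  qed
  ultimately have GK: "G = K \<or> K = {}"
  proof -
    assume cl: "closedin (top_of_set K) G" and op: "openin (top_of_set K) G"
    show ?thesis
    proof (cases "K = {}")
      case False
      then have "B \<noteq> {}" using surj by auto
      then have "G \<noteq> {}" using GgB by auto
      then show ?thesis using conK cl op unfolding connected_clopen by blast
    qed simp
  qed
  show ?thesis
  proof (rule inj_onI)
    fix x y assume xy: "x \<in> K" "y \<in> K" "f x = f y"
    then have "x \<in> G" "y \<in> G" using GK by auto
    then have "x = g (f x)" "y = g (f y)" unfolding G_def by auto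
    then show "x = y" using xy(3) by simp
  qed
qed

end


lemma nonsep:
  fixes f :: "complex \<Rightarrow> complex" and R X B F :: "complex set"
  assumes contf: "continuous_on UNIV f" and light: "light f" and openR: "open R"
    and frontR: "frontier R \<subseteq> f -` X" and openB: "open B" and finF: "finite F"
    and XB: "X \<inter> B \<subseteq> F"
    and zR: "z \<in> closure R" and zint: "z \<notin> interior (closure R)" and fzB: "f z \<in> B"
  shows False
proof -
  define w where "w = f z"
  obtain \<delta>1 where \<delta>1: "\<delta>1 > 0" "\<forall>x\<in>F. x \<noteq> w \<longrightarrow> \<delta>1 \<le> dist w x"
    using finite_set_avoid[OF finF] by blast
  obtain \<delta>2 where \<delta>2: "\<delta>2 > 0" "ball w \<delta>2 \<subseteq> B"
    using openB fzB open_contains_ball unfolding w_def by blast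
  define \<epsilon> where "\<epsilon> = min \<delta>1 \<delta>2"
  have \<epsilon>: "\<epsilon> > 0" using \<delta>1 \<delta>2 unfolding \<epsilon>_def by simp
  have Xball: "y = w" if "y \<in> X" "y \<in> ball w \<epsilon>" for y
  proof -
    have "y \<in> B" using that(2) \<delta>2(2) unfolding \<epsilon>_def by auto
    then have "y \<in> F" using XB that(1) by blast
    moreover have "dist w y < \<delta>1" using that(2) unfolding \<epsilon>_def by simp
    ultimately show ?thesis using \<delta>1(2) by force
  qed
  have "isCont f z" using contf by (simp add: continuous_on_eq_continuous_at)
  then obtain \<rho>0 where \<rho>0: "\<rho>0 > 0" "\<And>x. dist x z < \<rho>0 \<Longrightarrow> dist (f x) (f z) < \<epsilon>"
    using \<epsilon> unfolding continuous_at_eps_delta by blast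
  have frw: "f y = w" if "y \<in> frontier R" "y \<in> ball z \<rho>0" for y
  proof -
    have "f y \<in> X" using frontR that(1) by blast
    moreover have "f y \<in> ball w \<epsilon>" using \<rho>0(2)[of y] that(2) unfolding w_def by (simp add: dist_commute)
    ultimately show ?thesis using Xball by blast
  qed
  define \<rho> where "\<rho> = \<rho>0 / 2"
  define \<delta> where "\<delta> = \<rho> / 2"
  have \<rho>: "\<rho> > 0" "\<rho> < \<rho>0" "\<delta> > 0" "\<delta> < \<rho>" using \<rho>0(1) unfolding \<rho>_def \<delta>_def by auto
  obtain a where a: "a \<in> R" "dist a z < \<delta>" using zR \<rho>(3) closure_approachable by blast
  obtain b where b: "b \<notin> closure R" "dist b z < \<delta>"
  proof -
    have "\<not> ball z \<delta> \<subseteq> closure R"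
    proof
      assume "ball z \<delta> \<subseteq> closure R"
      then have "ball z \<delta> \<subseteq> interior (closure R)" by (rule interior_maximal) simp
      moreover have "z \<in> ball z \<delta>" using \<rho>(3) by simp
      ultimately show False using zint by blast
    qed
    then obtain b0 where "b0 \<in> ball z \<delta>" "b0 \<notin> closure R" by blast
    then show ?thesis using that[of b0] by (simp add: dist_commute)
  qed
  have aF: "a \<notin> frontier R" using a(1) openR by (simp add: frontier_def interior_open)
  have bF: "b \<notin> frontier R" using b(1) by (simp add: frontier_def)
  have nc: "\<not> connected_component (- frontier R) a b"
  proof
    assume "connected_component (- frontier R) a b"
    then obtain T where T: "connected T" "T \<subseteq> - frontier R" "a \<in> T" "b \<in> T"
      unfolding connected_component_def by blast
    have "T \<inter> R \<noteq> {}" using T(3) a(1) by blast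
    moreover have "T - R \<noteq> {}" using T(4) b(1) closure_subset by blast
    ultimately have "T \<inter> frontier R \<noteq> {}" using connected_Int_frontier[OF T(1)] by blast
    then show False using T(2) by blast
  qed
  obtain C where C: "C \<in> components (frontier R)" "\<not> connected_component (- C) a b"
    using separation_by_component_closed_pointwise[OF frontier_closed nc] by blast
  have Cclosed: "closed C" using closed_components[OF frontier_closed C(1)] .
  have Cconn: "connected C" using in_components_connected[OF C(1)] .
  have CF: "C \<subseteq> frontier R" using in_components_subset[OF C(1)] .
  have segball: "closed_segment a b \<subseteq> ball z \<delta>"
    using a(2) b(2) by (intro closed_segment_subset convex_ball) (auto simp: dist_commute)
  obtain c where c: "c \<in> C" "c \<in> closed_segment a b"
  proof -
    have "\<not> closed_segment a b \<subseteq> - C"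
    proof
      assume "closed_segment a b \<subseteq> - C"
      then have "connected_component (- C) a b"
        by (intro connected_componentI[OF connected_segment]) auto
      then show False using C(2) by blast
    qed
    then show ?thesis using that by blast
  qed
  have cb: "c \<in> ball z \<delta>" using c(2) segball by blast
  define K0 where "K0 = C \<inter> cball z \<rho>"
  have cK0: "compact K0" unfolding K0_def using Cclosed by (simp add: closed_Int_compact)
  have cinK0: "c \<in> K0" unfolding K0_def using c(1) cb \<rho> by auto
  have wne: "f -` {w} \<noteq> {}" unfolding w_def by blast
  have tdw: "totally_disconnected (f -` {w})" using light wne unfolding light_def by blast
  have td: "\<exists>x. D \<subseteq> {x}" if "D \<subseteq> K0" "connected D" for D
  proof -
    have "D \<subseteq> f -` {w}"
    proof
      fix y assume "y \<in> D"
      then have "y \<in> frontier R" "y \<in> ball z \<rho>0" using that(1) CF \<rho>(2) unfolding K0_def by (auto simp: dist_commute)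
      then show "y \<in> f -` {w}" using frw by blast
    qed
    then show ?thesis using tdw that(2) unfolding totally_disconnected_def by blast
  qed
  have cY: "c \<notin> sphere z \<rho>" using cb \<rho> by (auto simp: dist_commute)
  obtain U where U: "c \<in> U" "U \<subseteq> K0" "U \<inter> sphere z \<rho> = {}" "closed U" "openin (top_of_set K0) U"
    using zero_dim_clopen[OF cK0 cinK0 closed_sphere cY td] by blast
  have Uball: "U \<subseteq> ball z \<rho>"
  proof
    fix x assume x: "x \<in> U"
    then have "dist z x \<le> \<rho>" using U(2) unfolding K0_def by auto
    moreover have "dist z x \<noteq> \<rho>" using x U(3) by auto
    ultimately show "x \<in> ball z \<rho>" by simp
  qed
  obtain Ov where O: "open Ov" "U = K0 \<inter> Ov" using U(5) openin_open by blast
  have "U = C \<inter> (Ov \<inter> ball z \<rho>)"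
  proof
    show "U \<subseteq> C \<inter> (Ov \<inter> ball z \<rho>)" using O(2) Uball unfolding K0_def by blast
    show "C \<inter> (Ov \<inter> ball z \<rho>) \<subseteq> U" using O(2) unfolding K0_def by auto
  qed
  then have Uo: "openin (top_of_set C) U" using O(1) openin_open by blast
  have Uc: "closedin (top_of_set C) U" using U(2) U(4) unfolding K0_def by (intro closed_subset) auto
  have "U = C" using Cconn Uo Uc U(1) unfolding connected_clopen by blast
  then have "C \<subseteq> K0" using U(2) by simp
  then obtain x where "C \<subseteq> {x}" using td Cconn by blast
  then have Cc: "C = {c}" using c(1) by auto
  have "connected_component (- C) a b"
  proof (rule connected_componentI)
    show "connected (- {c})" by (rule connected_punctured_universe) simp
    show "- {c} \<subseteq> - C" using Cc by simp
    show "a \<in> - {c}" using aF CF c(1) by auto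
    show "b \<in> - {c}" using bF CF c(1) by auto
  qed
  then show False using C(2) by blast
qed


theorem corollary5p16:
  fixes f :: "complex \<Rightarrow> complex" and \<Omega> R :: "complex set"
  assumes "harmonic_cplx f"
    and "light f"
    and "\<Omega> \<in> components (- (f ` crit_set f \<union> cluster_inf f))"
    and "finite (interior (closure \<Omega>) - \<Omega>)"
    and "R \<in> components (- (f -` (f ` crit_set f \<union> cluster_inf f)))"
    and "bounded R"
    and "f ` R = \<Omega>"
    and "f ` (interior (closure R) - R) \<subseteq> interior (closure \<Omega>) - \<Omega>"
    and "(interior (closure R) - R) \<inter> crit_set f = {}"
  shows "(\<forall>w\<in>interior (closure \<Omega>).
            ecard {z\<in>interior (closure R). f z = w} = Val f R \<Omega>)
         \<and> (simply_connected (interior (closure \<Omega>)) \<longrightarrow> inj_on f (interior (closure R)))"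
proof -
  note H = assms(1) and light = assms(2) and Om = assms(3) and finF = assms(4) and Rc = assms(5)
    and bddR = assms(6) and fR = assms(7) and fKR = assms(8) and crit = assms(9)
  define X where "X = f ` crit_set f \<union> cluster_inf f"
  define K where "K = interior (closure R)"
  define B where "B = interior (closure \<Omega>)"
  have contf: "continuous_on UNIV f" by (rule harmonic_cont[OF H])
  have clX: "closed X" unfolding X_def by (rule closed_X[OF H])
  have clfX: "closed (f -` X)" using contf clX by (simp add: continuous_on_closed_vimage)
  have openR: "open R" using Rc clfX unfolding X_def by (metis open_components closed_def)
  have frontR: "frontier R \<subseteq> f -` X"
  proof -
    have "frontier R \<subseteq> frontier (- (f -` X))" using frontier_of_components_subset Rc unfolding X_def by blast
    also have "\<dots> = frontier (f -` X)" by (rule frontier_complement)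
    also have "\<dots> \<subseteq> f -` X" using clfX by (rule frontier_subset_closed)
    finally show ?thesis .
  qed
  have RX: "R \<subseteq> - (f -` X)" using in_components_subset[OF Rc] unfolding X_def by simp
  have openOm: "open \<Omega>" using Om clX unfolding X_def by (metis open_components closed_def)
  have OmX: "\<Omega> \<subseteq> - X" using in_components_subset[OF Om] unfolding X_def by simp
  have conOm: "connected \<Omega>" using in_components_connected[OF Om] .
  have neOm: "\<Omega> \<noteq> {}" using in_components_nonempty[OF Om] .
  have conR: "connected R" using in_components_connected[OF Rc] .
  have RK: "R \<subseteq> K" unfolding K_def by (rule interior_maximal[OF closure_subset openR])
  have Kcl: "K \<subseteq> closure R" unfolding K_def by (rule interior_subset)
  have clK: "closure K = closure R"
    using closure_mono[OF RK] closure_mono[OF Kcl] by auto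
  have OmB: "\<Omega> \<subseteq> B" unfolding B_def by (rule interior_maximal[OF closure_subset openOm])
  have Bcl: "B \<subseteq> closure \<Omega>" unfolding B_def by (rule interior_subset)
  have conB: "connected B" using connected_intermediate_closure[OF conOm OmB Bcl] .
  have conK: "connected K" using connected_intermediate_closure[OF conR RK Kcl] .
  have openB: "open B" unfolding B_def by simp
  have openK: "open K" unfolding K_def by simp
  have bddK: "bounded K" using bddR Kcl bounded_closure bounded_subset by blast
  have fK: "f ` K \<subseteq> B"
  proof
    fix y assume "y \<in> f ` K"
    then obtain z where z: "z \<in> K" "y = f z" by blast
    show "y \<in> B"
    proof (cases "z \<in> R")
      case True then show ?thesis using z fR OmB by blast
    next
      case False then show ?thesis using z fKR unfolding K_def B_def by blast
    qed
  qed
  have bd: "f z \<notin> B" if "z \<in> closure K" "z \<notin> K" for z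
  proof
    assume fz: "f z \<in> B"
    show False
    proof (rule nonsep[OF contf light openR frontR openB finF])
      show "X \<inter> B \<subseteq> interior (closure \<Omega>) - \<Omega>" using OmX unfolding B_def by blast
      show "z \<in> closure R" using that(1) clK by simp
      show "z \<notin> interior (closure R)" using that(2) unfolding K_def .
      show "f z \<in> B" using fz .
    qed
  qed
  have li: "\<exists>r>0. inj_on f (ball z r)" if "z \<in> K" for z
  proof -
    have "z \<notin> crit_set f"
    proof (cases "z \<in> R")
      case True
      then have "f z \<notin> X" using RX by blast
      then show ?thesis unfolding X_def by blast
    next
      case False then show ?thesis using crit that unfolding K_def by blast
    qed
    then have "jac f z \<noteq> 0" unfolding crit_set_def by simp
    then show ?thesis by (rule harmonic_locally_injective[OF H])
  qed
  interpret plh f K B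
    by (unfold_locales) (use contf openK bddK openB fK bd li in auto)
  obtain k where k: "\<forall>w\<in>B. finite {z\<in>K. f z = w} \<and> card {z\<in>K. f z = w} = k"
    using fiber_card_const[OF conB] by blast
  have ecK: "ecard {z\<in>K. f z = w} = enat k" if "w \<in> B" for w
    using k that unfolding ecard_def by simp
  have fibR: "{z\<in>R. f z = w} = {z\<in>K. f z = w}" if "w \<in> \<Omega>" for w
  proof
    show "{z\<in>R. f z = w} \<subseteq> {z\<in>K. f z = w}" using RK by blast
    show "{z\<in>K. f z = w} \<subseteq> {z\<in>R. f z = w}"
    proof
      fix z assume z: "z \<in> {z\<in>K. f z = w}"
      show "z \<in> {z\<in>R. f z = w}"
      proof (rule ccontr)
        assume "z \<notin> {z\<in>R. f z = w}"
        then have "z \<in> interior (closure R) - R" using z unfolding K_def by auto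
        then have "f z \<notin> \<Omega>" using fKR by blast
        then show False using z that by simp
      qed
    qed
  qed
  have Val: "Val f R \<Omega> = enat k"
  proof -
    have "Val f R \<Omega> = (SUP w\<in>\<Omega>. enat k)"
      unfolding Val_def using fibR ecK OmB by (intro SUP_cong) auto
    also have "\<dots> = enat k" using neOm by simp
    finally show ?thesis .
  qed
  have part1: "\<forall>w\<in>interior (closure \<Omega>). ecard {z\<in>interior (closure R). f z = w} = Val f R \<Omega>"
    using ecK Val unfolding K_def B_def by simp
  have surj: "f ` K = B"
  proof
    show "f ` K \<subseteq> B" by (rule fK)
    show "B \<subseteq> f ` K"
    proof
      fix w assume w: "w \<in> B"
      obtain w0 where w0: "w0 \<in> \<Omega>" using neOm by blast
      then obtain r0 where r0: "r0 \<in> R" "f r0 = w0" using fR by blast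
      have "r0 \<in> {z\<in>K. f z = w0}" using r0 RK by blast
      moreover have "finite {z\<in>K. f z = w0}" "card {z\<in>K. f z = w0} = k" using k w0 OmB by auto
      ultimately have "k > 0" using card_gt_0_iff by blast
      then have "{z\<in>K. f z = w} \<noteq> {}" using k w by fastforce
      then show "w \<in> f ` K" by blast
    qed
  qed
  have part2: "simply_connected B \<longrightarrow> inj_on f K"
    using inj_simply_connected[OF conB _ conK surj] by blast
  show ?thesis using part1 part2 unfolding K_def B_def by blast
qed

end
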